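(* Let $(S,d)$ be a complete metric space with a Hausdorff topology $\sigma$ compatible with $d$. Let $\phi:S\to(-\infty,+\infty]$, $D(\phi)\ne\emptyset$, satisfy: there exist $A,B>0$, $u_\star\in S$ with $\phi\ge-A-Bd^2(\cdot,u_\star)$; $\sup_{n,m}d(u_n,u_m)<+\infty$, $u_n\stackrel{\sigma}{\rightharpoonup}u$ $\Rightarrow$ $\liminf_n\phi(u_n)\ge\phi(u)$; and $\sup_{n,m}\{d(u_n,u_m),\phi(u_n)\}<+\infty$ $\Rightarrow$ some subsequence of $(u_n)$ $\sigma$-converges. Let $\mathcal{P}_\epsilon:S\to(-\infty,+\infty]$ ($\epsilon>0$) satisfy $\mathcal{P}_\epsilon(\cdot)\ge-\tilde A-\tilde Bd^2(\cdot,\tilde u_\star)$ for some $\tilde A,\tilde B>0$, $\tilde u_\star\in S$, and, for every $\epsilon_n\to0$: $\sup_{n,m}d(u_n,u_m)<+\infty$, $u_n\stackrel{\sigma}{\rightharpoonup}u$ $\Rightarrow$ $\sup_n|\mathcal{P}_{\epsilon_n}(u_n)|<+\infty$. Set $\phi_\epsilon=\phi+\epsilon\mathcal{P}_\epsilon$. If $\epsilon(\tau)>0$ with $\epsilon(\tau)/\tau\to0$ as $\tau\to0$, then for all $u,u_\tau\in S$ with $u_\tau\stackrel{\sigma}{\rightharpoonup}u$ and $\sup_\tau\{\phi_{\epsilon(\tau)}(u_\tau),d(u_\tau,u)\}<+\infty$, $$\liminf_{\tau\to0}\frac{\phi_{\epsilon(\tau)}(u_\tau)-\mathcal{Y}_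\tau\phi_{\epsilon(\tau)}(u_\tau)}{\tau}\ge\frac12|\partial^-\phi|^2(u).$$
   Context: $\sigma$ compatible with $d$: if $u_n\stackrel{\sigma}{\rightharpoonup}u$, $v_n\stackrel{\sigma}{\rightharpoonup}v$ then $\liminf_n d(u_n,v_n)\ge d(u,v)$; if $d(u_n,v_n)\to0$ and $u_n\stackrel{\sigma}{\rightharpoonup}u$ then $v_n\stackrel{\sigma}{\rightharpoonup}u$. Local slope $|\partial\phi|(v)=\limsup_{w\stackrel{d}{\to}v}\frac{(\phi(v)-\phi(w))^+}{d(v,w)}$; relaxed slope $|\partial^-\phi|(u)=\inf\{\liminf_n|\partial\phi|(u_n): u_n\stackrel{\sigma}{\rightharpoonup}u,\ \sup_n\{d(u_n,u),\phi(u_n)\}<+\infty\}$; $\mathcal{Y}_\tau f(u)=\inf_{v\in S}\{f(v)+\frac1{2\tau}d^2(v,u)\}$. *)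

theory Defs
  imports "HOL-Analysis.Analysis" "HOL-Library.Extended_Real"
begin

text \<open>The metric d is dist on a complete metric space type; sigma is a separate topology.
Functionals take values in ereal (intended range (-infinity, +infinity]).\<close>

definition sigma_compatible :: "'a::metric_space topology \<Rightarrow> bool" where
  "sigma_compatible \<sigma> \<longleftrightarrow>
     (\<forall>u v x y. limitin \<sigma> u x sequentially \<and> limitin \<sigma> v y sequentially
         \<longrightarrow> liminf (\<lambda>n. ereal (dist (u n) (v n))) \<ge> ereal (dist x y)) \<and>
     (\<forall>u v x. (\<lambda>n. dist (u n) (v n)) \<longlonglongrightarrow> 0 \<and> limitin \<sigma> u x sequentially
         \<longrightarrow> limitin \<sigma> v x sequentially)"

text \<open>Local slope; +infinity outside the domain, and the positive part makes it 0 at isolated points.\<close>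
definition local_slope :: "('a::metric_space \<Rightarrow> ereal) \<Rightarrow> 'a \<Rightarrow> ereal" where
  "local_slope \<phi> v =
     (if \<phi> v = \<infinity> then \<infinity>
      else max 0 (Limsup (at v) (\<lambda>w. max 0 (\<phi> v - \<phi> w) / ereal (dist v w))))"

definition relaxed_slope :: "'a::metric_space topology \<Rightarrow> ('a \<Rightarrow> ereal) \<Rightarrow> 'a \<Rightarrow> ereal" where
  "relaxed_slope \<sigma> \<phi> u =
     Inf {liminf (\<lambda>n. local_slope \<phi> (s n)) | s.
            limitin \<sigma> s u sequentially \<and>
            (\<exists>M::real. \<forall>n. dist (s n) u \<le> M \<and> \<phi> (s n) \<le> ereal M)}"

definition moreau_yosida :: "real \<Rightarrow> ('a::metric_space \<Rightarrow> ereal) \<Rightarrow> 'a \<Rightarrow> ereal" where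
  "moreau_yosida \<tau> f u = (INF v. f v + ereal ((dist v u)\<^sup>2 / (2 * \<tau>)))"

end

theory Submission
  imports Defs
begin


lemma sq_tri:
  fixes z w u0 :: "'a::metric_space"
  shows "(dist z u0)\<^sup>2 \<le> 2 * (dist z w)\<^sup>2 + 2 * (dist w u0)\<^sup>2"
proof -
  have "dist z u0 \<le> dist z w + dist w u0" by (rule dist_triangle)
  then have "(dist z u0)\<^sup>2 \<le> (dist z w + dist w u0)\<^sup>2"
    by (simp add: power_mono)
  also have "\<dots> \<le> 2 * (dist z w)\<^sup>2 + 2 * (dist w u0)\<^sup>2"
  proof -
    have "0 \<le> (dist z w - dist w u0)\<^sup>2" by simp
    then show ?thesis by (simp add: power2_eq_square algebra_simps)
  qed
  finally show ?thesis .
qed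

lemma coercive:
  fixes \<phi> :: "'a::metric_space \<Rightarrow> ereal"
  assumes low: "\<forall>x. \<phi> x \<ge> ereal (- A - B * (dist x u0)\<^sup>2)" and B: "B > 0"
    and r: "r > 0"
  shows "\<phi> z + ereal ((dist z w)\<^sup>2 / (2*r)) \<ge>
     ereal (- A - 2*B*(dist w u0)\<^sup>2 + (1/(2*r) - 2*B) * (dist z w)\<^sup>2)"
proof -
  have "\<phi> z + ereal ((dist z w)\<^sup>2 / (2*r)) \<ge> ereal (- A - B * (dist z u0)\<^sup>2) + ereal ((dist z w)\<^sup>2 / (2*r))"
    using low add_right_mono by blast
  moreover have "- A - B * (dist z u0)\<^sup>2 + (dist z w)\<^sup>2 / (2*r) \<ge> - A - 2*B*(dist w u0)\<^sup>2 + (1/(2*r) - 2*B) * (dist z w)\<^sup>2"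
  proof -
    have "B * (dist z u0)\<^sup>2 \<le> B * (2 * (dist z w)\<^sup>2 + 2 * (dist w u0)\<^sup>2)"
      using sq_tri[of z u0 w] B by (simp add: mult_left_mono)
    then show ?thesis by (simp add: algebra_simps)
  qed
  ultimately show ?thesis
    by (smt (verit) order_trans plus_ereal.simps(1) ereal_less_eq(3))
qed



lemma minimizer_exists:
  fixes \<sigma> :: "'a::metric_space topology" and \<phi> :: "'a \<Rightarrow> ereal"
  assumes top: "topspace \<sigma> = UNIV"
    and comp: "sigma_compatible \<sigma>"
    and notm: "\<And>x. \<phi> x \<noteq> -\<infinity>"
    and low: "\<forall>x. \<phi> x \<ge> ereal (- A - B * (dist x u0)\<^sup>2)" and B: "B > 0"
    and lsc: "\<And>s x. (\<exists>M. \<forall>n m. dist (s n) (s m) \<le> M) \<Longrightarrow> limitin \<sigma> s x sequentially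
        \<Longrightarrow> liminf (\<lambda>n. \<phi> (s n)) \<ge> \<phi> x"
    and cpt: "\<And>s :: nat \<Rightarrow> 'a. (\<exists>M::real. \<forall>n m. dist (s n) (s m) \<le> M \<and> \<phi> (s n) \<le> ereal M)
        \<Longrightarrow> \<exists>r x. strict_mono r \<and> limitin \<sigma> (s \<circ> r) x sequentially"
    and r: "0 < r" "r \<le> 1/(8*B)"
    and fw: "\<phi> w \<noteq> \<infinity>"
  shows "\<exists>v. \<phi> v \<noteq> \<infinity> \<and> (\<forall>z. \<phi> v + ereal ((dist v w)\<^sup>2 / (2*r)) \<le> \<phi> z + ereal ((dist z w)\<^sup>2 / (2*r)))"
proof -
  define g where "g z = \<phi> z + ereal ((dist z w)\<^sup>2 / (2*r))" for z
  define Y where "Y = (INF z. g z)"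
  define L0 where "L0 = - A - 2*B*(dist w u0)\<^sup>2"
  have c: "1/(2*r) - 2*B \<ge> 1/(4*r)" using r B by (simp add: field_simps)
  have gL: "g z \<ge> ereal (L0 + (1/(4*r)) * (dist z w)\<^sup>2)" for z
  proof -
    have "(1/(4*r)) * (dist z w)\<^sup>2 \<le> (1/(2*r) - 2*B) * (dist z w)\<^sup>2"
      using mult_right_mono[OF c, of "(dist z w)\<^sup>2"] by simp
    then have "ereal (L0 + (1/(4*r)) * (dist z w)\<^sup>2) \<le> ereal (- A - 2*B*(dist w u0)\<^sup>2 + (1/(2*r) - 2*B) * (dist z w)\<^sup>2)"
      unfolding L0_def by simp
    also have "\<dots> \<le> g z" unfolding g_def by (rule coercive[OF low B r(1)])
    finally show ?thesis .
  qed
  have gL0: "g z \<ge> ereal L0" for z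
  proof -
    have "ereal L0 \<le> ereal (L0 + (1/(4*r)) * (dist z w)\<^sup>2)" using r by simp
    then show ?thesis using gL[of z] by (rule order_trans)
  qed
  have YL: "Y \<ge> ereal L0" unfolding Y_def by (rule INF_greatest) (use gL0 in auto)
  have Yw: "Y \<le> g w" unfolding Y_def by (rule INF_lower) simp
  have gw: "g w = \<phi> w" unfolding g_def by simp
  have "Y \<noteq> \<infinity>" using Yw gw fw by auto
  moreover have "Y \<noteq> -\<infinity>" using YL by auto
  ultimately obtain Yr where Yr: "Y = ereal Yr" by (cases Y) auto
  have "\<forall>n. \<exists>z. g z < ereal (Yr + 1 / Suc n)"
  proof
    fix n
    have "Y < ereal (Yr + 1 / Suc n)" using Yr by simp
    then show "\<exists>z. g z < ereal (Yr + 1 / Suc n)" unfolding Y_def by (simp add: INF_less_iff)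
  qed
  then obtain zs where zs: "\<And>n. g (zs n) < ereal (Yr + 1 / Suc n)" by metis
  have zs1: "g (zs n) < ereal (Yr + 1)" for n
  proof -
    have "1 / real (Suc n) \<le> 1" by simp
    then show ?thesis using zs[of n] by (smt (verit) ereal_less_eq(3) less_le_trans)
  qed
  define R2 where "R2 = 4*r*(Yr + 1 - L0)"
  have dz: "dist (zs n) w \<le> sqrt R2" for n
  proof -
    have "ereal (L0 + (1/(4*r)) * (dist (zs n) w)\<^sup>2) < ereal (Yr + 1)"
      using gL[of "zs n"] zs1[of n] by (rule le_less_trans)
    then have "(1/(4*r)) * (dist (zs n) w)\<^sup>2 \<le> Yr + 1 - L0" by simp
    then have "(dist (zs n) w)\<^sup>2 \<le> R2" unfolding R2_def using r by (simp add: field_simps)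
    then show ?thesis by (simp add: real_le_rsqrt)
  qed
  have phz: "\<phi> (zs n) \<le> ereal (Yr + 1)" for n
  proof -
    have "\<phi> (zs n) \<le> g (zs n)" unfolding g_def using r
      by (simp add: add_increasing2)
    then show ?thesis using zs1[of n] by simp
  qed
  define M where "M = max (2 * sqrt R2) (Yr + 1)"
  have pd: "dist (zs n) (zs m) \<le> 2 * sqrt R2" for n m
  proof -
    have "dist (zs n) (zs m) \<le> dist (zs n) w + dist (zs m) w" by (metis dist_commute dist_triangle)
    then show ?thesis using dz[of n] dz[of m] by simp
  qed
  have "\<exists>M::real. \<forall>n m. dist (zs n) (zs m) \<le> M \<and> \<phi> (zs n) \<le> ereal M"
    apply (rule exI[of _ M]) unfolding M_def using pd phz
    by (smt (verit, best) ereal_less_eq(3) order_trans)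
  from cpt[OF this] obtain \<rho> x where \<rho>: "strict_mono \<rho>" and lim: "limitin \<sigma> (zs \<circ> \<rho>) x sequentially"
    by blast
  define s where "s = zs \<circ> \<rho>"
  have lim': "limitin \<sigma> s x sequentially" using lim s_def by simp
  have "\<exists>M. \<forall>n m. dist (s n) (s m) \<le> M" unfolding s_def using pd by auto
  from lsc[OF this lim'] have lsx: "liminf (\<lambda>n. \<phi> (s n)) \<ge> \<phi> x" .
  have cw: "limitin \<sigma> (\<lambda>n. w) w sequentially" using top by simp
  have ldx: "liminf (\<lambda>n. ereal (dist (s n) w)) \<ge> ereal (dist x w)"
    using comp lim' cw unfolding sigma_compatible_def by blast
  have "liminf (\<lambda>n. \<phi> (s n)) \<le> ereal (Yr + 1)"
  proof -
    have "liminf (\<lambda>n. \<phi> (s n)) \<le> limsup (\<lambda>n. \<phi> (s n))" by (rule Liminf_le_Limsup) simp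
    also have "\<dots> \<le> ereal (Yr + 1)" by (rule Limsup_bounded) (use phz s_def in auto)
    finally show ?thesis .
  qed
  then have "\<phi> x \<le> ereal (Yr + 1)" using lsx by simp
  then have "\<phi> x \<noteq> \<infinity>" by auto
  with notm[of x] obtain \<alpha> where \<alpha>: "\<phi> x = ereal \<alpha>" by (cases "\<phi> x") auto
  define \<beta> where "\<beta> = dist x w"
  have key: "\<alpha> + \<beta>\<^sup>2/(2*r) \<le> Yr + e" if e: "e > 0" for e
  proof -
    have b0: "\<beta> \<ge> 0" unfolding \<beta>_def by simp
    define \<eta> where "\<eta> = e / (2 + \<beta>/r)"
    have den: "2 + \<beta>/r > 0" using b0 r by (simp add: add_pos_nonneg)
    have \<eta>: "\<eta> > 0" unfolding \<eta>_def using e den by simp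
    have e1: "\<forall>\<^sub>F n in sequentially. ereal (\<alpha> - \<eta>) < \<phi> (s n)"
    proof (rule less_LiminfD)
      have "ereal (\<alpha> - \<eta>) < ereal \<alpha>" using \<eta> by simp
      then show "ereal (\<alpha> - \<eta>) < liminf (\<lambda>n. \<phi> (s n))" using lsx \<alpha> by (metis less_le_trans)
    qed
    have e2: "\<forall>\<^sub>F n in sequentially. ereal (\<beta> - \<eta>) < ereal (dist (s n) w)"
    proof (rule less_LiminfD)
      have "ereal (\<beta> - \<eta>) < ereal \<beta>" using \<eta> by simp
      then show "ereal (\<beta> - \<eta>) < liminf (\<lambda>n. ereal (dist (s n) w))" using ldx \<beta>_def by (metis less_le_trans)
    qed
    obtain N0 where N0: "1 / real (Suc N0) < \<eta>"
      using \<eta> by (metis reals_Archimedean inverse_eq_divide)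
    have e3: "\<forall>\<^sub>F n in sequentially. 1 / real (Suc (\<rho> n)) < \<eta>"
    proof (rule eventually_sequentiallyI[of N0])
      fix n assume "N0 \<le> n"
      then have "N0 \<le> \<rho> n" using seq_suble[OF \<rho>, of n] by simp
      then have "1 / real (Suc (\<rho> n)) \<le> 1 / real (Suc N0)" by (simp add: frac_le)
      then show "1 / real (Suc (\<rho> n)) < \<eta>" using N0 by simp
    qed
    from eventually_conj[OF e1 eventually_conj[OF e2 e3]] obtain n where
      n: "ereal (\<alpha> - \<eta>) < \<phi> (s n)" "\<beta> - \<eta> < dist (s n) w" "1 / real (Suc (\<rho> n)) < \<eta>"
      by (auto simp: eventually_sequentially)
    have gs: "g (s n) < ereal (Yr + 1 / Suc (\<rho> n))" using zs s_def by simp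
    have "\<phi> (s n) \<noteq> \<infinity>" using gs unfolding g_def by auto
    with notm obtain a where a: "\<phi> (s n) = ereal a" by (cases "\<phi> (s n)") auto
    define b where "b = dist (s n) w"
    have ha: "\<alpha> - \<eta> < a" using n a by simp
    have hb: "\<beta> - \<eta> < b" "b \<ge> 0" using n b_def by auto
    have hg: "a + b\<^sup>2/(2*r) < Yr + \<eta>" using gs a n(3) unfolding g_def b_def by simp
    have bb: "b\<^sup>2 \<ge> \<beta>\<^sup>2 - 2*\<beta>*\<eta>"
    proof (cases "\<beta> \<le> \<eta>")
      case True
      then have "\<beta> * (\<beta> - 2*\<eta>) \<le> 0" using b0 \<eta> by (intro mult_nonneg_nonpos) auto
      then have "\<beta>\<^sup>2 - 2*\<beta>*\<eta> \<le> 0" by (simp add: power2_eq_square algebra_simps)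
      then show ?thesis by (smt (verit) zero_le_power2)
    next
      case False
      then have "(\<beta> - \<eta>)\<^sup>2 \<le> b\<^sup>2" using hb by (intro power_mono) auto
      moreover have "(\<beta> - \<eta>)\<^sup>2 = \<beta>\<^sup>2 - 2*\<beta>*\<eta> + \<eta>\<^sup>2" by (simp add: power2_eq_square algebra_simps)
      moreover have "\<eta>\<^sup>2 \<ge> 0" by simp
      ultimately show ?thesis by linarith
    qed
    have "(\<beta>\<^sup>2 - 2*\<beta>*\<eta>)/(2*r) \<le> b\<^sup>2/(2*r)" using bb r by (simp add: divide_right_mono)
    then have "\<alpha> - \<eta> + (\<beta>\<^sup>2 - 2*\<beta>*\<eta>)/(2*r) < Yr + \<eta>" using ha hg by simp
    moreover have "(\<beta>\<^sup>2 - 2*\<beta>*\<eta>)/(2*r) = \<beta>\<^sup>2/(2*r) - \<beta>*\<eta>/r"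
      using r by (simp add: field_simps)
    moreover have "\<eta> * (2 + \<beta>/r) = 2*\<eta> + \<beta>*\<eta>/r" by (simp add: algebra_simps)
    ultimately have "\<alpha> + \<beta>\<^sup>2/(2*r) < Yr + \<eta> * (2 + \<beta>/r)" by linarith
    also have "\<eta> * (2 + \<beta>/r) = e" unfolding \<eta>_def using den by simp
    finally show ?thesis by simp
  qed
  have "\<alpha> + \<beta>\<^sup>2/(2*r) \<le> Yr" using key by (rule field_le_epsilon)
  then have gx: "g x \<le> Y" unfolding g_def Yr \<beta>_def using \<alpha> by simp
  show ?thesis
  proof (intro exI conjI allI)
    show "\<phi> x \<noteq> \<infinity>" using \<alpha> by simp
    fix z
    have "Y \<le> g z" unfolding Y_def by (rule INF_lower) simp
    then show "\<phi> x + ereal ((dist x w)\<^sup>2 / (2*r)) \<le> \<phi> z + ereal ((dist z w)\<^sup>2 / (2*r))"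
      using gx unfolding g_def by simp
  qed
qed



lemma slope_at_min:
  fixes \<phi> :: "'a::metric_space \<Rightarrow> ereal"
  assumes r: "r > 0" and fv: "\<phi> v = ereal c"
    and min: "\<forall>z. \<phi> v + ereal ((dist v w)\<^sup>2 / (2*r)) \<le> \<phi> z + ereal ((dist z w)\<^sup>2 / (2*r))"
  shows "local_slope \<phi> v \<le> ereal (dist v w / r)"
proof -
  define dv where "dv = dist v w"
  have dv0: "dv \<ge> 0" unfolding dv_def by simp
  have L: "Limsup (at v) (\<lambda>z. max 0 (\<phi> v - \<phi> z) / ereal (dist v z)) \<le> ereal (dv / r)"
  proof (rule ereal_le_epsilon2)
    fix e :: real assume e: "e > 0"
    show "Limsup (at v) (\<lambda>z. max 0 (\<phi> v - \<phi> z) / ereal (dist v z)) \<le> ereal (dv / r) + ereal e"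
    proof (rule Limsup_bounded)
      show "\<forall>\<^sub>F z in at v. max 0 (\<phi> v - \<phi> z) / ereal (dist v z) \<le> ereal (dv / r) + ereal e"
        unfolding eventually_at
      proof (intro exI[of _ "2*r*e"] conjI ballI impI)
        show "0 < 2*r*e" using r e by simp
        fix z assume z: "z \<in> UNIV" "z \<noteq> v \<and> dist z v < 2*r*e"
        define dz where "dz = dist z w"
        define dvz where "dvz = dist v z"
        have dvz: "dvz > 0" "dvz < 2*r*e" using z unfolding dvz_def by (auto simp: dist_commute)
        have mz: "ereal c + ereal (dv\<^sup>2 / (2*r)) \<le> \<phi> z + ereal (dz\<^sup>2 / (2*r))"
          using min fv unfolding dv_def dz_def by metis
        show "max 0 (\<phi> v - \<phi> z) / ereal (dist v z) \<le> ereal (dv / r) + ereal e"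
        proof (cases "\<phi> z")
          case PInf
          then show ?thesis using fv r e dv0 by (simp add: ereal_divide_eq_0_iff)
        next
          case MInf
          then show ?thesis using mz by simp
        next
          case (real c')
          have ineq: "c + dv\<^sup>2/(2*r) \<le> c' + dz\<^sup>2/(2*r)" using mz real by simp
          have tri: "dz \<le> dv + dvz" "dv \<le> dz + dvz"
            unfolding dz_def dv_def dvz_def by (metis dist_commute dist_triangle)+
          have "max 0 (c - c') / dvz \<le> dv / r + e"
          proof (cases "c \<le> c'")
            case True
            then show ?thesis using dv0 r e by simp
          next
            case False
            have "c - c' \<le> (dz\<^sup>2 - dv\<^sup>2)/(2*r)" using ineq by (simp add: diff_divide_distrib)
            also have "dz\<^sup>2 - dv\<^sup>2 = (dz - dv) * (dz + dv)" by (simp add: power2_eq_square algebra_simps)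
            also have "(dz - dv) * (dz + dv) \<le> dvz * (dz + dv)"
              using tri dv0 unfolding dz_def by (intro mult_right_mono) auto
            finally have "c - c' \<le> dvz * (dz + dv) / (2*r)" using r by (simp add: divide_right_mono)
            then have "(c - c') / dvz \<le> (dz + dv) / (2*r)" using dvz r by (simp add: field_simps)
            also have "\<dots> \<le> (2*dv + dvz) / (2*r)" using tri r by (simp add: divide_right_mono)
            also have "\<dots> = dv / r + dvz/(2*r)" using r by (simp add: field_simps)
            also have "\<dots> \<le> dv / r + e" using dvz r by (simp add: field_simps)
            finally show ?thesis using False by simp
          qed
          moreover have "0 \<le> dv / r + e" using dv0 r e by simp
          ultimately show ?thesis using real fv dvz unfolding dvz_def by (auto simp: max_def split: if_splits)
        qed
      qed
    qed
  qed
  show ?thesis unfolding local_slope_def using fv L dv0 r unfolding dv_def by simp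
qed



lemma telescope:
  fixes p d :: "nat \<Rightarrow> real"
  assumes q: "0 < q" "q < 1" and t: "\<tau> > 0" and m: "m \<ge> 0"
    and rel: "\<forall>k<N. p k + (d k)\<^sup>2/(2*(\<tau>*q^k)) \<le> p (Suc k) + (d (Suc k))\<^sup>2/(2*(\<tau>*q^k))"
    and dm: "\<forall>k\<in>{1..N}. m*(\<tau>*q^k) \<le> d k"
  shows "p N + (d N)\<^sup>2/(2*(\<tau>*q^N)) - (p 0 + (d 0)\<^sup>2/(2*(\<tau>*q^0))) \<ge> m\<^sup>2 * \<tau> * q * (1 - q^N) / 2"
  using rel dm
proof (induction N)
  case 0
  then show ?case by simp
next
  case (Suc N)
  have IH: "p N + (d N)\<^sup>2/(2*(\<tau>*q^N)) - (p 0 + (d 0)\<^sup>2/(2*(\<tau>*q^0))) \<ge> m\<^sup>2 * \<tau> * q * (1 - q^N) / 2"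
    using Suc by auto
  have R: "p N + (d N)\<^sup>2/(2*(\<tau>*q^N)) \<le> p (Suc N) + (d (Suc N))\<^sup>2/(2*(\<tau>*q^N))"
    using Suc.prems(1) by auto
  define r1 where "r1 = \<tau>*q^Suc N"
  have r1: "r1 > 0" unfolding r1_def using q t by simp
  have rN: "\<tau>*q^N = r1 / q" unfolding r1_def using q by simp
  define D where "D = d (Suc N)"
  have D: "m * r1 \<le> D" using bspec[OF Suc.prems(2), of "Suc N"] unfolding r1_def D_def by simp
  have D2: "(m * r1)\<^sup>2 \<le> D\<^sup>2" using D m r1 by (intro power_mono) auto
  have "D\<^sup>2/(2*r1) - D\<^sup>2/(2*(\<tau>*q^N)) = D\<^sup>2 * (1 - q) / (2*r1)"
    unfolding rN using r1 q by (simp add: field_simps)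
  also have "\<dots> \<ge> (m*r1)\<^sup>2 * (1 - q) / (2*r1)"
    using D2 q r1 by (intro divide_right_mono mult_right_mono) auto
  also have "(m*r1)\<^sup>2 * (1 - q) / (2*r1) = m\<^sup>2 * r1 * (1 - q) / 2"
    using r1 by (simp add: power2_eq_square field_simps)
  finally have step: "D\<^sup>2/(2*r1) - D\<^sup>2/(2*(\<tau>*q^N)) \<ge> m\<^sup>2 * r1 * (1 - q) / 2" .
  have alg: "m\<^sup>2 * \<tau> * q * (1 - q^N) / 2 + m\<^sup>2 * r1 * (1 - q) / 2 = m\<^sup>2 * \<tau> * q * (1 - q^Suc N) / 2"
    unfolding r1_def by (simp add: field_simps)
  show ?case using IH R step alg unfolding D_def r1_def by linarith
qed



locale phictx =
  fixes \<sigma> :: "'a::metric_space topology" and \<phi> :: "'a \<Rightarrow> ereal" and A B :: real and u0 :: 'a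
  assumes top: "topspace \<sigma> = UNIV"
    and comp: "sigma_compatible \<sigma>"
    and notm: "\<And>x. \<phi> x \<noteq> -\<infinity>"
    and low: "\<forall>x. \<phi> x \<ge> ereal (- A - B * (dist x u0)\<^sup>2)" and Bpos: "B > 0"
    and lsc: "\<And>s x. (\<exists>M. \<forall>n m. dist (s n) (s m) \<le> M) \<Longrightarrow> limitin \<sigma> s x sequentially
        \<Longrightarrow> liminf (\<lambda>n. \<phi> (s n)) \<ge> \<phi> x"
    and cpt: "\<And>s :: nat \<Rightarrow> 'a. (\<exists>M::real. \<forall>n m. dist (s n) (s m) \<le> M \<and> \<phi> (s n) \<le> ereal M)
        \<Longrightarrow> \<exists>r x. strict_mono r \<and> limitin \<sigma> (s \<circ> r) x sequentially"
begin

definition ismin :: "real \<Rightarrow> 'a \<Rightarrow> 'a \<Rightarrow> bool" where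
  "ismin r w v \<longleftrightarrow> \<phi> v \<noteq> \<infinity> \<and>
     (\<forall>z. \<phi> v + ereal ((dist v w)\<^sup>2 / (2*r)) \<le> \<phi> z + ereal ((dist z w)\<^sup>2 / (2*r)))"

lemma ismin_ex: "0 < r \<Longrightarrow> r \<le> 1/(8*B) \<Longrightarrow> \<phi> w \<noteq> \<infinity> \<Longrightarrow> \<exists>v. ismin r w v"
  unfolding ismin_def using minimizer_exists[OF top comp notm low Bpos lsc cpt] by blast

lemma ismin_props:
  assumes m: "ismin r w v" and r: "0 < r" "r \<le> 1/(8*B)" and pw: "\<phi> w = ereal pw"
  shows "\<phi> v \<le> ereal pw" "(dist v w)\<^sup>2 \<le> 4*r*(pw + A + 2*B*(dist w u0)\<^sup>2)"
proof -
  have mw: "\<phi> v + ereal ((dist v w)\<^sup>2 / (2*r)) \<le> ereal pw"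
    using m pw unfolding ismin_def by (metis add.right_neutral dist_self power2_eq_square
      mult_zero_left div_0 zero_ereal_def)
  show "\<phi> v \<le> ereal pw"
  proof -
    have "\<phi> v \<le> \<phi> v + ereal ((dist v w)\<^sup>2 / (2*r))" using r by (simp add: add_increasing2)
    then show ?thesis using mw by simp
  qed
  have c: "1/(2*r) - 2*B \<ge> 1/(4*r)" using r Bpos by (simp add: field_simps)
  have "ereal (- A - 2*B*(dist w u0)\<^sup>2 + (1/(2*r) - 2*B) * (dist v w)\<^sup>2) \<le> ereal pw"
    using coercive[OF low Bpos r(1), where z=v and w=w] mw by (rule order_trans)
  then have h: "- A - 2*B*(dist w u0)\<^sup>2 + (1/(2*r) - 2*B) * (dist v w)\<^sup>2 \<le> pw" by simp
  have "(1/(4*r)) * (dist v w)\<^sup>2 \<le> (1/(2*r) - 2*B) * (dist v w)\<^sup>2"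
    using mult_right_mono[OF c, of "(dist v w)\<^sup>2"] by simp
  with h have "(1/(4*r)) * (dist v w)\<^sup>2 \<le> pw + A + 2*B*(dist w u0)\<^sup>2" by linarith
  then show "(dist v w)\<^sup>2 \<le> 4*r*(pw + A + 2*B*(dist w u0)\<^sup>2)" using r by (simp add: field_simps)
qed

lemma slope_nonneg: "\<phi> v \<noteq> \<infinity> \<Longrightarrow> local_slope \<phi> v \<ge> 0"
  unfolding local_slope_def by simp

lemma per_point:
  assumes q: "0 < q" "q < 1" and N: "N \<ge> 1" and t: "0 < \<tau>" "\<tau> \<le> 1/(8*B)"
    and pw: "\<phi> w = ereal pw"
  shows "\<exists>v0 v p0 sl r. ismin \<tau> w v0 \<and> \<phi> v0 = ereal p0 \<and> 0 < r \<and> r \<le> \<tau> \<and> ismin r w v \<and>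
     local_slope \<phi> v = ereal sl \<and> sl \<ge> 0 \<and>
     pw - (p0 + (dist v0 w)\<^sup>2/(2*\<tau>)) \<ge> sl\<^sup>2 * \<tau> * q * (1 - q^N) / 2"
proof -
  define rr where "rr k = \<tau> * q^k" for k
  have rr: "0 < rr k" "rr k \<le> \<tau>" for k unfolding rr_def using q t
    by (auto simp: power_le_one mult_left_le)
  have rr8: "rr k \<le> 1/(8*B)" for k using rr(2)[of k] t by simp
  have fw: "\<phi> w \<noteq> \<infinity>" using pw by simp
  define vs where "vs k = (SOME v. ismin (rr k) w v)" for k
  have vs: "ismin (rr k) w (vs k)" for k
    unfolding vs_def by (rule someI_ex) (rule ismin_ex[OF rr(1) rr8 fw])
  have fin: "\<exists>c. \<phi> (vs k) = ereal c" for k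
    using vs[of k] notm[of "vs k"] unfolding ismin_def by (cases "\<phi> (vs k)") auto
  define p where "p k = real_of_ereal (\<phi> (vs k))" for k
  have p: "\<phi> (vs k) = ereal (p k)" for k using fin[of k] unfolding p_def by auto
  define d where "d k = dist (vs k) w" for k
  have slb: "local_slope \<phi> (vs k) \<le> ereal (d k / rr k)" for k
    using slope_at_min[where \<phi>=\<phi> and v="vs k" and c="p k" and r="rr k" and w=w, OF rr(1)[of k] p[of k]] vs[of k] unfolding ismin_def d_def by blast
  have sl0: "local_slope \<phi> (vs k) \<ge> 0" for k using slope_nonneg p by simp
  define sl where "sl k = real_of_ereal (local_slope \<phi> (vs k))" for k
  have sl: "local_slope \<phi> (vs k) = ereal (sl k)" "sl k \<ge> 0" "sl k \<le> d k / rr k" for k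
  proof -
    show 1: "local_slope \<phi> (vs k) = ereal (sl k)" unfolding sl_def using slb[of k] sl0[of k]
      by (cases "local_slope \<phi> (vs k)") auto
    show "sl k \<ge> 0" using sl0[of k] 1 by simp
    show "sl k \<le> d k / rr k" using slb[of k] 1 by simp
  qed
  define m where "m = Min (sl ` {1..N})"
  have ne: "sl ` {1..N} \<noteq> {}" using N by auto
  obtain K where K: "K \<in> {1..N}" "sl K = m" unfolding m_def using Min_in[OF _ ne] by auto
  have m0: "m \<ge> 0" using K sl(2) by metis
  have mle: "m \<le> sl k" if "k \<in> {1..N}" for k unfolding m_def using that by simp
  have rel: "\<forall>k<N. p k + (d k)\<^sup>2/(2*(\<tau>*q^k)) \<le> p (Suc k) + (d (Suc k))\<^sup>2/(2*(\<tau>*q^k))"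
  proof (intro allI impI)
    fix k
    have "\<phi> (vs k) + ereal ((d k)\<^sup>2 / (2*rr k)) \<le> \<phi> (vs (Suc k)) + ereal ((d (Suc k))\<^sup>2 / (2*rr k))"
      using vs[of k] unfolding ismin_def d_def by blast
    then show "p k + (d k)\<^sup>2/(2*(\<tau>*q^k)) \<le> p (Suc k) + (d (Suc k))\<^sup>2/(2*(\<tau>*q^k))"
      using p unfolding rr_def by simp
  qed
  have dm: "\<forall>k\<in>{1..N}. m*(\<tau>*q^k) \<le> d k"
  proof
    fix k assume k: "k \<in> {1..N}"
    have "m \<le> d k / rr k" using mle[OF k] sl(3)[of k] by linarith
    then show "m*(\<tau>*q^k) \<le> d k" using rr(1)[of k] unfolding rr_def by (simp add: field_simps)
  qed
  have tel: "p N + (d N)\<^sup>2/(2*(\<tau>*q^N)) - (p 0 + (d 0)\<^sup>2/(2*(\<tau>*q^0))) \<ge> m\<^sup>2 * \<tau> * q * (1 - q^N) / 2"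
    by (rule telescope[OF q t(1) m0 rel dm])
  have "\<phi> (vs N) + ereal ((d N)\<^sup>2 / (2*rr N)) \<le> \<phi> w + ereal ((dist w w)\<^sup>2 / (2*rr N))"
    using vs[of N] unfolding ismin_def d_def by blast
  then have pN: "p N + (d N)\<^sup>2/(2*(\<tau>*q^N)) \<le> pw" using p pw unfolding rr_def by simp
  show ?thesis
  proof (intro exI conjI)
    show "ismin \<tau> w (vs 0)" using vs[of 0] unfolding rr_def by simp
    show "\<phi> (vs 0) = ereal (p 0)" by (rule p)
    show "0 < rr K" "rr K \<le> \<tau>" "ismin (rr K) w (vs K)" by (rule rr, rule rr, rule vs)
    show "local_slope \<phi> (vs K) = ereal (sl K)" "sl K \<ge> 0" by (rule sl, rule sl)
    show "pw - (p 0 + (dist (vs 0) w)\<^sup>2/(2*\<tau>)) \<ge> (sl K)\<^sup>2 * \<tau> * q * (1 - q^N) / 2"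
      using tel pN K(2) unfolding d_def by simp
  qed
qed

end



lemma ereal_div_lower:
  assumes "X \<ge> ereal D" "\<tau> > 0"
  shows "X / ereal \<tau> \<ge> ereal (D / \<tau>)"
proof (cases X)
  case (real x)
  then show ?thesis using assms by (simp add: divide_right_mono)
next
  case PInf
  then show ?thesis using assms by simp
next
  case MInf
  then show ?thesis using assms by simp
qed

lemma F_lower:
  fixes \<phi> P :: "'a::metric_space \<Rightarrow> ereal"
  assumes t: "\<tau> > 0" and e: "e > 0" and pw: "\<phi> w = ereal pw" and Pw: "P w = ereal Pw"
    and p0: "\<phi> v0 = ereal p0" and P0: "P v0 = ereal P0"
  shows "((\<phi> w + ereal e * P w) - moreau_yosida \<tau> (\<lambda>x. \<phi> x + ereal e * P x) w) / ereal \<tau>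
     \<ge> ereal ((pw + e*Pw - (p0 + e*P0 + (dist v0 w)\<^sup>2/(2*\<tau>))) / \<tau>)"
proof -
  have Y: "moreau_yosida \<tau> (\<lambda>x. \<phi> x + ereal e * P x) w \<le> ereal (p0 + e*P0 + (dist v0 w)\<^sup>2/(2*\<tau>))"
  proof -
    have "moreau_yosida \<tau> (\<lambda>x. \<phi> x + ereal e * P x) w \<le> \<phi> v0 + ereal e * P v0 + ereal ((dist v0 w)\<^sup>2 / (2 * \<tau>))"
      unfolding moreau_yosida_def by (rule INF_lower) simp
    then show ?thesis using p0 P0 by simp
  qed
  have "(\<phi> w + ereal e * P w) - moreau_yosida \<tau> (\<lambda>x. \<phi> x + ereal e * P x) w
      \<ge> ereal (pw + e*Pw) - ereal (p0 + e*P0 + (dist v0 w)\<^sup>2/(2*\<tau>))"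
    using ereal_minus_mono[OF _ Y, of "ereal (pw + e*Pw)" "\<phi> w + ereal e * P w"] pw Pw by simp
  then have "(\<phi> w + ereal e * P w) - moreau_yosida \<tau> (\<lambda>x. \<phi> x + ereal e * P x) w
      \<ge> ereal (pw + e*Pw - (p0 + e*P0 + (dist v0 w)\<^sup>2/(2*\<tau>)))" by simp
  then show ?thesis by (rule ereal_div_lower[OF _ t])
qed

lemma choose_qN:
  fixes t :: real
  assumes "t < 1"
  shows "\<exists>q N. 0 < q \<and> q < 1 \<and> N \<ge> 1 \<and> t < q * (1 - q^N)"
proof (cases "t < 0")
  case True
  have "(0::real) < 1/2 * (1 - (1/2)^1)" by simp
  then show ?thesis using True by (intro exI[of _ "1/2"] exI[of _ 1]) auto
next
  case False
  define q where "q = (1 + t) / 2"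
  have q: "0 < q" "q < 1" "t < q" using False assms unfolding q_def by auto
  have "0 < 1 - t/q" using q by (simp add: field_simps)
  from real_arch_pow_inv[OF this q(2)] obtain n where n: "q^n < 1 - t/q" by blast
  have "q^(Suc n) \<le> q^n" using q by (simp add: mult_left_le_one_le)
  then have "q^(Suc n) < 1 - t/q" using n by simp
  then have "t/q < 1 - q^(Suc n)" by simp
  then have "t < q * (1 - q^(Suc n))" using q by (simp add: field_simps)
  then show ?thesis using q by (intro exI[of _ q] exI[of _ "Suc n"]) auto
qed



lemma fin_split:
  assumes h: "a + ereal e * b \<le> ereal M" and bL: "b \<ge> ereal L" and e: "0 < e" "e \<le> 1"
    and L: "L \<le> 0" and a: "a \<noteq> -\<infinity>"
  shows "a \<le> ereal (M - L) \<and> a \<noteq> \<infinity> \<and> b \<noteq> \<infinity>"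
proof (cases b)
  case PInf
  then have "ereal e * b = \<infinity>" using e by simp
  then have "a + ereal e * b = \<infinity>" using a by simp
  with h have False by simp
  then show ?thesis ..
next
  case MInf
  then show ?thesis using bL by simp
next
  case (real bb)
  have bb: "bb \<ge> L" using bL real by simp
  have ebb: "e * bb \<ge> L"
  proof -
    have "e * bb \<ge> e * L" using bb e by (simp add: mult_left_mono)
    moreover have "e * L \<ge> L" using e L by (simp add: mult_le_cancel_right1)
    ultimately show ?thesis by linarith
  qed
  show ?thesis
  proof (cases a)
    case (real aa)
    then have "aa + e*bb \<le> M" using h \<open>b = ereal bb\<close> by simp
    then show ?thesis using real ebb \<open>b = ereal bb\<close> by simp
  next
    case PInf
    then show ?thesis using h \<open>b = ereal bb\<close> by simp
  next
    case MInf
    then show ?thesis using a by simp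
  qed
qed

lemma seq_limitin:
  assumes "limitin \<sigma> ut u (at_right (0::real))" "ts \<longlonglongrightarrow> 0" "\<And>n. ts n > 0"
  shows "limitin \<sigma> (\<lambda>n. ut (ts n)) u sequentially"
proof -
  have fl: "filterlim ts (at_right 0) sequentially"
    using assms(2,3) by (intro tendsto_imp_filterlim_at_right) auto
  show ?thesis using assms(1) unfolding limitin_def
    using fl by (auto simp: filterlim_iff)
qed



theorem proposition8p1:
  fixes \<sigma> :: "'a::complete_space topology"
    and \<phi> :: "'a \<Rightarrow> ereal"
    and P :: "real \<Rightarrow> 'a \<Rightarrow> ereal"
    and \<epsilon> :: "real \<Rightarrow> real"
    and ut :: "real \<Rightarrow> 'a"
    and u :: 'a
  assumes sigma_top: "topspace \<sigma> = UNIV" "Hausdorff_space \<sigma>"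
    and sigma_comp: "sigma_compatible \<sigma>"
    and phi_proper: "\<And>x. \<phi> x \<noteq> -\<infinity>" "\<exists>x. \<phi> x \<noteq> \<infinity>"
    and phi_lower: "\<exists>A B u0. A > 0 \<and> B > 0 \<and>
        (\<forall>x. \<phi> x \<ge> ereal (- A - B * (dist x u0)\<^sup>2))"
    and phi_lsc: "\<And>s x. (\<exists>M. \<forall>n m. dist (s n) (s m) \<le> M) \<Longrightarrow> limitin \<sigma> s x sequentially
        \<Longrightarrow> liminf (\<lambda>n. \<phi> (s n)) \<ge> \<phi> x"
    and phi_compact: "\<And>s :: nat \<Rightarrow> 'a. (\<exists>M::real. \<forall>n m. dist (s n) (s m) \<le> M \<and> \<phi> (s n) \<le> ereal M)
        \<Longrightarrow> \<exists>r x. strict_mono r \<and> limitin \<sigma> (s \<circ> r) x sequentially"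
    and P_proper: "\<And>e x. e > 0 \<Longrightarrow> P e x \<noteq> -\<infinity>"
    and P_lower: "\<exists>A B u0. A > 0 \<and> B > 0 \<and>
        (\<forall>e>0. \<forall>x. P e x \<ge> ereal (- A - B * (dist x u0)\<^sup>2))"
    and P_bounded: "\<And>en s x. (\<forall>n. en n > 0) \<Longrightarrow> en \<longlonglongrightarrow> 0 \<Longrightarrow>
        (\<exists>M. \<forall>n m. dist (s n) (s m) \<le> M) \<Longrightarrow> limitin \<sigma> s x sequentially \<Longrightarrow>
        (\<exists>M::real. \<forall>n. \<bar>P (en n) (s n)\<bar> \<le> ereal M)"
    and eps_pos: "\<And>\<tau>. \<tau> > 0 \<Longrightarrow> \<epsilon> \<tau> > 0"
    and eps_lim: "((\<lambda>\<tau>. \<epsilon> \<tau> / \<tau>) \<longlongrightarrow> 0) (at_right 0)"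
    and ut_conv: "limitin \<sigma> ut u (at_right 0)"
    and ut_bdd: "\<exists>M::real. \<forall>\<tau>>0.
        \<phi> (ut \<tau>) + ereal (\<epsilon> \<tau>) * P (\<epsilon> \<tau>) (ut \<tau>) \<le> ereal M \<and> dist (ut \<tau>) u \<le> M"
  shows "Liminf (at_right 0) (\<lambda>\<tau>.
           ((\<phi> (ut \<tau>) + ereal (\<epsilon> \<tau>) * P (\<epsilon> \<tau>) (ut \<tau>))
             - moreau_yosida \<tau> (\<lambda>x. \<phi> x + ereal (\<epsilon> \<tau>) * P (\<epsilon> \<tau>) x) (ut \<tau>)) / ereal \<tau>)
         \<ge> (relaxed_slope \<sigma> \<phi> u)\<^sup>2 / 2"
proof -
  obtain A B u0 where AB: "A > 0" "B > 0" and low: "\<forall>x. \<phi> x \<ge> ereal (- A - B * (dist x u0)\<^sup>2)"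
    using phi_lower by blast
  obtain A' B' u1 where AB': "A' > 0" "B' > 0"
    and Plow: "\<forall>e>0. \<forall>x. P e x \<ge> ereal (- A' - B' * (dist x u1)\<^sup>2)"
    using P_lower by blast
  obtain M where M: "\<forall>\<tau>>0. \<phi> (ut \<tau>) + ereal (\<epsilon> \<tau>) * P (\<epsilon> \<tau>) (ut \<tau>) \<le> ereal M \<and> dist (ut \<tau>) u \<le> M"
    using ut_bdd by blast
  interpret phictx \<sigma> \<phi> A B u0
    using sigma_top(1) sigma_comp phi_proper(1) low AB(2) phi_lsc phi_compact
    by unfold_locales auto
  define F where "F \<tau> = ((\<phi> (ut \<tau>) + ereal (\<epsilon> \<tau>) * P (\<epsilon> \<tau>) (ut \<tau>))
             - moreau_yosida \<tau> (\<lambda>x. \<phi> x + ereal (\<epsilon> \<tau>) * P (\<epsilon> \<tau>) x) (ut \<tau>)) / ereal \<tau>" for \<tau>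
  define lsl where "lsl = relaxed_slope \<sigma> \<phi> u"
  have lsl0: "lsl \<ge> 0"
    unfolding lsl_def relaxed_slope_def
  proof (rule Inf_greatest, clarify)
    fix s :: "nat \<Rightarrow> 'a"
    show "0 \<le> liminf (\<lambda>n. local_slope \<phi> (s n))"
      by (rule Liminf_bounded) (auto simp: local_slope_def)
  qed
  have main: "\<forall>\<^sub>F \<tau> in at_right 0. y < F \<tau>" if y: "y < lsl\<^sup>2 / 2" for y
  proof (rule ccontr)
    assume ne: "\<not> (\<forall>\<^sub>F \<tau> in at_right 0. y < F \<tau>)"
    obtain yr where yr: "y \<le> ereal yr" "ereal yr < lsl\<^sup>2 / 2"
    proof (cases y)
      case (real r) then show ?thesis using that y by auto
    next
      case PInf then show ?thesis using y by simp
    next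
      case MInf
      have "ereal (-1) < lsl\<^sup>2 / 2"
      proof -
        have "0 \<le> lsl\<^sup>2 / 2" using lsl0 by (cases lsl) auto
        then show ?thesis by (rule less_le_trans[rotated]) simp
      qed
      then show ?thesis using that MInf by auto
    qed
    obtain l' where l': "l' \<ge> 0" "l' = 0 \<or> ereal l' < lsl" "yr < l'\<^sup>2 / 2"
    proof (cases "yr < 0")
      case True then show ?thesis using that[of 0] by simp
    next
      case False
      show ?thesis
      proof (cases lsl)
        case PInf
        define l where "l = sqrt (2*yr) + 1"
        have "sqrt (2*yr) < l" unfolding l_def by simp
        then have "(sqrt (2*yr))\<^sup>2 < l\<^sup>2" using False by (intro power_strict_mono) auto
        then have "2*yr < l\<^sup>2" using False by simp
        moreover have "0 \<le> l" unfolding l_def using False by simp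
        ultimately show ?thesis using that[of l] PInf by simp
      next
        case MInf then show ?thesis using lsl0 by simp
      next
        case (real lr)
        have lr0: "lr \<ge> 0" using lsl0 real by simp
        have "ereal yr < ereal (lr\<^sup>2 / 2)" using yr(2) real by simp
        then have "2*yr < lr\<^sup>2" by simp
        then have "sqrt (2*yr) < sqrt (lr\<^sup>2)" by (simp only: real_sqrt_less_iff)
        then have sl: "sqrt (2*yr) < lr" using lr0 by simp
        define l where "l = (sqrt (2*yr) + lr) / 2"
        have "sqrt (2*yr) < l" "l < lr" using sl unfolding l_def by auto
        moreover from this(1) have "(sqrt (2*yr))\<^sup>2 < l\<^sup>2" using False by (intro power_strict_mono) auto
        moreover have "0 \<le> l" unfolding l_def using False lr0 by simp
        ultimately show ?thesis using that[of l] False real by simp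
      qed
    qed
    obtain q N where qN: "0 < q" "q < 1" "N \<ge> 1" and cgap: "yr < q * (1 - q^N) / 2 * l'\<^sup>2"
    proof (cases "l' = 0")
      case True
      have "\<exists>q N. 0 < q \<and> q < 1 \<and> N \<ge> 1 \<and> (0::real) < q * (1 - q^N)"
        by (rule choose_qN) simp
      then obtain q :: real and N :: nat where "0 < q \<and> q < 1 \<and> N \<ge> 1 \<and> 0 < q * (1 - q^N)" by blast
      then show ?thesis using that[of q N] True l'(3) by auto
    next
      case False
      then have lp: "l'\<^sup>2 > 0" using l'(1) by simp
      have "2*yr / l'\<^sup>2 < 1" using l'(3) lp by (simp add: field_simps)
      then obtain q :: real and N :: nat where qN: "0 < q \<and> q < 1 \<and> N \<ge> 1 \<and> 2*yr / l'\<^sup>2 < q * (1 - q^N)"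
        using choose_qN by blast
      then have "2*yr < q * (1 - q^N) * l'\<^sup>2" using lp by (simp add: field_simps)
      then show ?thesis using that[of q N] qN by simp
    qed
    define c where "c = q * (1 - q^N) / 2"
    have c0: "c > 0" unfolding c_def using qN by (simp add: power_less_one_iff)
    define gap where "gap = c * l'\<^sup>2 - yr"
    have gap: "gap > 0" using cgap unfolding gap_def c_def by simp
    have "\<forall>\<^sub>F \<tau> in at_right 0. \<epsilon> \<tau> / \<tau> < 1"
      using eps_lim by (rule order_tendstoD) simp
    then obtain b where b: "b > 0" "\<And>\<tau>. \<tau> > 0 \<Longrightarrow> \<tau> < b \<Longrightarrow> \<epsilon> \<tau> / \<tau> < 1"
      unfolding eventually_at_right_field by auto
    define \<tau>0 where "\<tau>0 = min b (min (1/(8*B)) 1)"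
    have \<tau>0: "\<tau>0 > 0" unfolding \<tau>0_def using b AB by simp
    have "\<forall>n. \<exists>\<tau>. 0 < \<tau> \<and> \<tau> < min \<tau>0 (1 / Suc n) \<and> F \<tau> \<le> y"
    proof
      fix n
      have pos: "min \<tau>0 (1 / Suc n) > 0" using \<tau>0 by simp
      from ne have "\<not> (\<exists>b>0. \<forall>\<tau>>0. \<tau> < b \<longrightarrow> y < F \<tau>)"
        unfolding eventually_at_right_field by simp
      then obtain \<tau> where "\<tau> > 0" "\<tau> < min \<tau>0 (1 / Suc n)" "\<not> y < F \<tau>"
        using pos by blast
      then show "\<exists>\<tau>. 0 < \<tau> \<and> \<tau> < min \<tau>0 (1 / Suc n) \<and> F \<tau> \<le> y" by (auto simp: not_less)
    qed
    then obtain ts where ts: "\<And>n. 0 < ts n" "\<And>n. ts n < min \<tau>0 (1 / Suc n)" "\<And>n. F (ts n) \<le> y"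
      by metis
    have ts_b: "ts n < b" "ts n \<le> 1/(8*B)" "ts n \<le> 1" for n
      using ts(2)[of n] unfolding \<tau>0_def by auto
    have ts_lim: "ts \<longlonglongrightarrow> 0"
    proof (rule tendsto_sandwich[of "\<lambda>n. 0" _ _ "\<lambda>n. 1 / Suc n"])
      show "\<forall>\<^sub>F n in sequentially. 0 \<le> ts n" using ts(1) by (simp add: less_imp_le)
      show "\<forall>\<^sub>F n in sequentially. ts n \<le> 1 / Suc n" using ts(2) by (simp add: less_imp_le)
      show "(\<lambda>n. 1 / real (Suc n)) \<longlonglongrightarrow> 0" by (rule LIMSEQ_inverse_real_of_nat[simplified inverse_eq_divide])
    qed simp
    define ws where "ws n = ut (ts n)" for n
    define es where "es n = \<epsilon> (ts n)" for n
    have es: "0 < es n" "es n < ts n" for n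
    proof -
      show "0 < es n" unfolding es_def using eps_pos ts(1) by simp
      have "\<epsilon> (ts n) / ts n < 1" using b(2) ts(1) ts_b(1) by simp
      then show "es n < ts n" unfolding es_def using ts(1)[of n] by (simp add: field_simps)
    qed
    have es_lim: "es \<longlonglongrightarrow> 0"
      by (rule tendsto_sandwich[of "\<lambda>n. 0" _ _ ts]) (use es ts_lim in \<open>auto simp: less_imp_le\<close>)
    have ws_d: "dist (ws n) u \<le> M" for n using M ts(1) unfolding ws_def by simp
    have M0: "M \<ge> 0" using ws_d[of 0] by (meson dual_order.trans zero_le_dist)
    have ws_lim: "limitin \<sigma> ws u sequentially"
      unfolding ws_def by (rule seq_limitin[OF ut_conv ts_lim ts(1)])
    define Phi where "Phi = M + A' + B' * (M + dist u u1)\<^sup>2"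
    have wfin: "\<exists>pw. \<phi> (ws n) = ereal pw \<and> pw \<le> Phi" for n
    proof -
      have h: "\<phi> (ws n) + ereal (es n) * P (es n) (ws n) \<le> ereal M"
        using M ts(1) unfolding ws_def es_def by simp
      have d1: "dist (ws n) u1 \<le> M + dist u u1"
        using ws_d[of n] dist_triangle[of "ws n" u1 u] by simp
      have "(dist (ws n) u1)\<^sup>2 \<le> (M + dist u u1)\<^sup>2" using d1 by (intro power_mono) auto
      then have LL: "- A' - B' * (dist (ws n) u1)\<^sup>2 \<ge> - A' - B' * (M + dist u u1)\<^sup>2"
        using AB' by (simp add: mult_left_mono)
      have Pb: "P (es n) (ws n) \<ge> ereal (- A' - B' * (dist (ws n) u1)\<^sup>2)" using Plow es(1) by simp
      have "0 \<le> B' * (dist (ws n) u1)\<^sup>2" using AB' by simp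
      then have L0: "- A' - B' * (dist (ws n) u1)\<^sup>2 \<le> 0" using AB' by linarith
      have e1: "es n \<le> 1" using es(2)[of n] ts_b(3)[of n] by simp
      from fin_split[OF h Pb es(1) e1 L0 phi_proper(1)]
      have fs: "\<phi> (ws n) \<le> ereal (M - (- A' - B' * (dist (ws n) u1)\<^sup>2))" "\<phi> (ws n) \<noteq> \<infinity>" by auto
      obtain pw where pw: "\<phi> (ws n) = ereal pw" using fs(2) phi_proper(1)[of "ws n"]
        by (cases "\<phi> (ws n)") auto
      have "pw \<le> Phi" using fs(1) pw LL unfolding Phi_def by simp
      then show ?thesis using pw by blast
    qed
    then obtain pw where pw: "\<And>n. \<phi> (ws n) = ereal (pw n)" "\<And>n. pw n \<le> Phi" by metis
    have "\<forall>n. \<exists>v0 v p0 sl r. ismin (ts n) (ws n) v0 \<and> \<phi> v0 = ereal p0 \<and> 0 < r \<and> r \<le> ts n \<and> ismin r (ws n) v \<and>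
        local_slope \<phi> v = ereal sl \<and> sl \<ge> 0 \<and>
        pw n - (p0 + (dist v0 (ws n))\<^sup>2/(2*ts n)) \<ge> sl\<^sup>2 * ts n * q * (1 - q^N) / 2"
      using per_point[OF qN(1,2,3) ts(1) ts_b(2) pw(1)] by blast
    then obtain V0 VK P0 SL R where PP: "\<And>n. ismin (ts n) (ws n) (V0 n)" "\<And>n. \<phi> (V0 n) = ereal (P0 n)"
      "\<And>n. 0 < R n" "\<And>n. R n \<le> ts n" "\<And>n. ismin (R n) (ws n) (VK n)"
      "\<And>n. local_slope \<phi> (VK n) = ereal (SL n)" "\<And>n. SL n \<ge> 0"
      "\<And>n. pw n - (P0 n + (dist (V0 n) (ws n))\<^sup>2/(2*ts n)) \<ge> (SL n)\<^sup>2 * ts n * q * (1 - q^N) / 2"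
      by metis
    define C where "C = Phi + A + 2*B*(M + dist u u0)\<^sup>2"
    have dbound: "(dist z (ws n))\<^sup>2 \<le> 4 * ts n * C \<and> 0 \<le> C"
      if z: "ismin r (ws n) z" "0 < r" "r \<le> ts n" for z r n
    proof -
      have r8: "r \<le> 1/(8*B)" using z(3) ts_b(2)[of n] by linarith
      define X where "X = pw n + A + 2*B*(dist (ws n) u0)\<^sup>2"
      have dX: "(dist z (ws n))\<^sup>2 \<le> 4*r*X"
        using ismin_props(2)[OF z(1) z(2) r8 pw(1)] unfolding X_def .
      have X0: "X \<ge> 0"
      proof (rule ccontr)
        assume "\<not> X \<ge> 0"
        then have "4*r*X < 0" using z(2) by (simp add: mult_pos_neg)
        then show False using dX by (smt (verit) zero_le_power2)
      qed
      have "dist (ws n) u0 \<le> M + dist u u0"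
        using ws_d[of n] dist_triangle[of "ws n" u0 u] by simp
      then have "(dist (ws n) u0)\<^sup>2 \<le> (M + dist u u0)\<^sup>2" by (intro power_mono) auto
      then have "2*B*(dist (ws n) u0)\<^sup>2 \<le> 2*B*(M + dist u u0)\<^sup>2" using AB by simp
      then have XC: "X \<le> C" unfolding X_def C_def using pw(2)[of n] by linarith
      have "4*r*X \<le> 4*ts n*X" using z(3) X0 by (simp add: mult_right_mono)
      also have "\<dots> \<le> 4*ts n*C" using XC ts(1)[of n] by (simp add: mult_left_mono)
      finally show ?thesis using dX X0 XC by linarith
    qed
    have C0: "0 \<le> C" using dbound[OF PP(1) ts(1) order_refl, of 0] by simp
    define Dd where "Dd = sqrt (4*C)"
    have dsq: "dist z (ws n) \<le> sqrt (4*C*ts n) \<and> dist z (ws n) \<le> Dd"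
      if z: "ismin r (ws n) z" "0 < r" "r \<le> ts n" for z r n
    proof -
      have "(dist z (ws n))\<^sup>2 \<le> 4*C*ts n" using dbound[OF z] by (simp add: algebra_simps)
      then have a: "dist z (ws n) \<le> sqrt (4*C*ts n)" by (simp add: real_le_rsqrt)
      have "4*C*ts n \<le> 4*C" using C0 ts_b(3)[of n] by (simp add: mult_left_le)
      then have "sqrt (4*C*ts n) \<le> Dd" unfolding Dd_def by simp
      then show ?thesis using a by linarith
    qed
    have g0: "(\<lambda>n. sqrt (4*C*ts n)) \<longlonglongrightarrow> 0"
      using tendsto_real_sqrt[OF tendsto_mult[OF tendsto_const ts_lim, of "4*C"]] by simp
    have conv: "limitin \<sigma> Z u sequentially \<and> (\<forall>n. dist (Z n) u \<le> Dd + M)"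
      if Z: "\<And>n. ismin (RR n) (ws n) (Z n)" "\<And>n. 0 < RR n" "\<And>n. RR n \<le> ts n" for Z RR
    proof
      have "(\<lambda>n. dist (ws n) (Z n)) \<longlonglongrightarrow> 0"
      proof (rule Lim_null_comparison[OF _ g0])
        show "\<forall>\<^sub>F n in sequentially. norm (dist (ws n) (Z n)) \<le> sqrt (4*C*ts n)"
          using dsq[OF Z] by (simp add: dist_commute)
      qed
      then show "limitin \<sigma> Z u sequentially"
        using sigma_comp ws_lim unfolding sigma_compatible_def by blast
      show "\<forall>n. dist (Z n) u \<le> Dd + M"
      proof
        fix n
        have "dist (Z n) u \<le> dist (Z n) (ws n) + dist (ws n) u" by (rule dist_triangle)
        then show "dist (Z n) u \<le> Dd + M" using dsq[OF Z, of n] ws_d[of n] by linarith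
      qed
    qed
    have V0c: "limitin \<sigma> V0 u sequentially" "\<And>n. dist (V0 n) u \<le> Dd + M"
      using conv[of "\<lambda>n. ts n" V0] PP(1) ts(1) by auto
    have VKc: "limitin \<sigma> VK u sequentially" "\<And>n. dist (VK n) u \<le> Dd + M"
      using conv[of R VK] PP(5,3,4) by auto
    have pair: "\<exists>K. \<forall>n m. dist (Z n) (Z m) \<le> K" if "\<And>n. dist (Z n) u \<le> K0" for Z K0
    proof (intro exI allI)
      fix n m
      have "dist (Z n) (Z m) \<le> dist (Z n) u + dist (Z m) u" by (metis dist_commute dist_triangle)
      then show "dist (Z n) (Z m) \<le> 2*K0" using that[of n] that[of m] by linarith
    qed
    have es_pos': "\<forall>n. es n > 0" using es(1) by simp
    obtain Mw where Mw: "\<And>n. \<bar>P (es n) (ws n)\<bar> \<le> ereal Mw"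
      using P_bounded[OF es_pos' es_lim pair[of ws M, OF ws_d] ws_lim] by blast
    obtain Mv where Mv: "\<And>n. \<bar>P (es n) (V0 n)\<bar> \<le> ereal Mv"
      using P_bounded[OF es_pos' es_lim pair[of V0 "Dd + M", OF V0c(2)] V0c(1)] by blast
    have finabs: "x = ereal (real_of_ereal x) \<and> \<bar>real_of_ereal x\<bar> \<le> K" if "\<bar>x\<bar> \<le> ereal K" for x K
      using that by (cases x) auto
    define Pwr where "Pwr n = real_of_ereal (P (es n) (ws n))" for n
    define Pvr where "Pvr n = real_of_ereal (P (es n) (V0 n))" for n
    have Pwr: "P (es n) (ws n) = ereal (Pwr n)" "\<bar>Pwr n\<bar> \<le> Mw" for n
      using finabs[OF Mw[of n]] unfolding Pwr_def by auto
    have Pvr: "P (es n) (V0 n) = ereal (Pvr n)" "\<bar>Pvr n\<bar> \<le> Mv" for n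
      using finabs[OF Mv[of n]] unfolding Pvr_def by auto
    define en where "en n = es n / ts n * (Pwr n - Pvr n)" for n
    have fl: "filterlim ts (at_right 0) sequentially"
      using ts_lim ts(1) by (intro tendsto_imp_filterlim_at_right) auto
    have ratio: "(\<lambda>n. es n / ts n) \<longlonglongrightarrow> 0"
      using filterlim_compose[OF eps_lim fl] unfolding es_def by simp
    have en_lim: "en \<longlonglongrightarrow> 0"
    proof (rule Lim_null_comparison)
      show "\<forall>\<^sub>F n in sequentially. norm (en n) \<le> es n / ts n * (Mw + Mv)"
      proof (rule always_eventually, rule allI)
        fix n
        have pos: "es n / ts n \<ge> 0" using es(1)[of n] ts(1)[of n] by simp
        have "\<bar>Pwr n - Pvr n\<bar> \<le> Mw + Mv" using Pwr(2)[of n] Pvr(2)[of n] by linarith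
        moreover have "norm (en n) = es n / ts n * \<bar>Pwr n - Pvr n\<bar>"
          unfolding en_def real_norm_def abs_mult using es(1)[of n] ts(1)[of n] by simp
        ultimately show "norm (en n) \<le> es n / ts n * (Mw + Mv)"
          using mult_left_mono[OF _ pos] by simp
      qed
      show "(\<lambda>n. es n / ts n * (Mw + Mv)) \<longlonglongrightarrow> 0"
        using tendsto_mult[OF ratio tendsto_const, of "Mw + Mv"] by simp
    qed
    have lowb: "c * (SL n)\<^sup>2 + en n \<le> yr" for n
    proof -
      have FL: "F (ts n) \<ge> ereal ((pw n + es n * Pwr n - (P0 n + es n * Pvr n + (dist (V0 n) (ws n))\<^sup>2/(2*ts n))) / ts n)"
        unfolding F_def using F_lower[where \<phi>=\<phi> and P="P (es n)" and w="ws n" and e="es n",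
            OF ts(1) es(1) pw(1) Pwr(1) PP(2) Pvr(1)]
        unfolding ws_def es_def by simp
      have eq: "(pw n + es n * Pwr n - (P0 n + es n * Pvr n + (dist (V0 n) (ws n))\<^sup>2/(2*ts n))) / ts n
          = (pw n - (P0 n + (dist (V0 n) (ws n))\<^sup>2/(2*ts n))) / ts n + en n"
        unfolding en_def using ts(1)[of n] by (simp add: field_simps)
      have "(SL n)\<^sup>2 * ts n * q * (1 - q^N) / 2 / ts n \<le> (pw n - (P0 n + (dist (V0 n) (ws n))\<^sup>2/(2*ts n))) / ts n"
        using divide_right_mono[OF PP(8)[of n], of "ts n"] ts(1)[of n] by (simp only: less_imp_le)
      moreover have "(SL n)\<^sup>2 * ts n * q * (1 - q^N) / 2 / ts n = c * (SL n)\<^sup>2"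
        unfolding c_def using ts(1)[of n] by (simp add: field_simps)
      ultimately have r1: "c * (SL n)\<^sup>2 + en n \<le> (pw n + es n * Pwr n - (P0 n + es n * Pvr n + (dist (V0 n) (ws n))\<^sup>2/(2*ts n))) / ts n"
        using eq by linarith
      have "ereal (c * (SL n)\<^sup>2 + en n) \<le> ereal yr"
        using r1 FL ts(3)[of n] yr(1) by (meson ereal_less_eq(3) order_trans)
      then show ?thesis by simp
    qed
    have mem: "liminf (\<lambda>n. local_slope \<phi> (VK n)) \<in> {liminf (\<lambda>n. local_slope \<phi> (s n)) | s.
            limitin \<sigma> s u sequentially \<and>
            (\<exists>M::real. \<forall>n. dist (s n) u \<le> M \<and> \<phi> (s n) \<le> ereal M)}"
    proof -
      have "\<phi> (VK n) \<le> ereal Phi" for n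
        using ismin_props(1)[OF PP(5)[of n] PP(3)[of n] _ pw(1)[of n]] PP(4)[of n] ts_b(2)[of n] pw(2)[of n]
        by (meson ereal_less_eq(3) order_trans)
      then have "\<forall>n. dist (VK n) u \<le> max (Dd + M) Phi \<and> \<phi> (VK n) \<le> ereal (max (Dd + M) Phi)"
        using VKc(2) by (meson ereal_less_eq(3) max.cobounded1 max.cobounded2 order_trans)
      then show ?thesis using VKc(1) by blast
    qed
    have lim_sl: "lsl \<le> liminf (\<lambda>n. ereal (SL n))"
      using Inf_lower[OF mem] PP(6) unfolding lsl_def relaxed_slope_def by simp
    have ev1: "\<forall>\<^sub>F n in sequentially. l' \<le> SL n"
    proof (cases "l' = 0")
      case True then show ?thesis using PP(7) by simp
    next
      case False
      then have "ereal l' < lsl" using l'(2) by simp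
      then have "ereal l' < liminf (\<lambda>n. ereal (SL n))" using lim_sl by (rule less_le_trans)
      from less_LiminfD[OF this] show ?thesis by (rule eventually_mono) simp
    qed
    have ev2: "\<forall>\<^sub>F n in sequentially. \<bar>en n\<bar> < gap"
      using tendstoD[OF en_lim gap] by (simp add: dist_real_def)
    from eventually_conj[OF ev1 ev2] obtain n where n: "l' \<le> SL n" "\<bar>en n\<bar> < gap"
      by (auto simp: eventually_sequentially)
    have "l'\<^sup>2 \<le> (SL n)\<^sup>2" using n(1) l'(1) by (intro power_mono) auto
    then have "c * l'\<^sup>2 \<le> c * (SL n)\<^sup>2" using c0 by (simp add: mult_left_mono)
    then have "c * (SL n)\<^sup>2 + en n > yr" using n(2) unfolding gap_def by linarith
    then show False using lowb[of n] by linarith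
  qed
  have "lsl\<^sup>2 / 2 \<le> Liminf (at_right 0) F"
    unfolding le_Liminf_iff using main by blast
  then show ?thesis unfolding F_def lsl_def .
qed


end
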